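(* Let $n\ge3$ be odd. Then $\lambda$ is an eigenvalue of $C_n$ if and only if $-\lambda$ is an eigenvalue of $C_n^{=}$.
   Context: A mixed graph is obtained from a finite simple graph by orienting some of its edges. With $\omega=\frac{1+\mathbf{i}\sqrt3}{2}$, the matrix $N$ has $(u,v)$-entry $\omega$ if $\overrightarrow{uv}$ is an arc, $\bar\omega$ if $\overrightarrow{vu}$ is an arc, $1$ for an undirected edge, $0$ otherwise; eigenvalues of a mixed graph are those of $N$. $C_n$ is the undirected $n$-cycle (whose $N$ is its ordinary adjacency matrix). $C_n^{=}$ is the mixed cycle $v_1v_2\cdots v_nv_1$ with arcs $\overrightarrow{v_1v_2},\overrightarrow{v_2v_3},\overrightarrow{v_3v_4}$ (indices mod $n$) and all other edges undirected. *)

theory Defs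
  imports "Jordan_Normal_Form.Char_Poly"
begin

text \<open>omega = (1 + i sqrt 3)/2. Vertices v_1..v_n are represented by indices 0..n-1.\<close>
definition omega :: complex where
  "omega = (1 + \<i> * complex_of_real (sqrt 3)) / 2"

definition mixed_mat :: "nat \<Rightarrow> (nat \<Rightarrow> nat \<Rightarrow> bool) \<Rightarrow> (nat \<Rightarrow> nat \<Rightarrow> bool) \<Rightarrow> complex mat" where
  "mixed_mat n edge arc = mat n n (\<lambda>(u, v).
      if arc u v then omega
      else if arc v u then cnj omega
      else if edge u v then 1 else 0)"

definition cyc_edge :: "nat \<Rightarrow> nat \<Rightarrow> nat \<Rightarrow> bool" where
  "cyc_edge n u v = (u < n \<and> v < n \<and> (v = (u + 1) mod n \<or> u = (v + 1) mod n))"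

definition C_mat :: "nat \<Rightarrow> complex mat" where
  "C_mat n = mixed_mat n (cyc_edge n) (\<lambda>_ _. False)"

text \<open>C_n^=: arcs v_1->v_2, v_2->v_3, v_3->v_4 (indices mod n), i.e. arcs i -> (i+1) mod n
  for i in {0,1,2}; all other cycle edges undirected.\<close>
definition Ceq_arc :: "nat \<Rightarrow> nat \<Rightarrow> nat \<Rightarrow> bool" where
  "Ceq_arc n u v = (u < n \<and> u \<le> 2 \<and> v = (u + 1) mod n)"

definition Ceq_mat :: "nat \<Rightarrow> complex mat" where
  "Ceq_mat n = mixed_mat n (cyc_edge n) (Ceq_arc n)"

end

theory Submission
  imports Defs
begin

lemma om2: "omega^2 = omega - 1"
  by (simp add: omega_def complex_eq_iff power2_eq_square field_simps)
lemma omc: "cnj omega = 1 - omega"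
  by (simp add: omega_def complex_eq_iff)

definition dd :: "nat \<Rightarrow> complex" where
  "dd u = (if u = 0 then 1 else if u = 1 then omega - 1 else if u = 2 then - omega else (-1)^(u+1))"

lemma dd_nz: "dd u \<noteq> 0"
  by (auto simp: dd_def omega_def complex_eq_iff)

lemma entry:
  assumes n: "n \<ge> 3" "odd n" and ij: "i < n" "j < n"
  shows "Ceq_mat n $$ (i,j) * dd j = - (dd i * C_mat n $$ (i,j))"
proof -
  have o2: "omega * omega = omega - 1" using om2 by (simp add: power2_eq_square)
  have C: "C_mat n $$ (i,j) = (if cyc_edge n i j then 1 else 0)"
    using ij by (simp add: C_mat_def mixed_mat_def)
  have E: "Ceq_mat n $$ (i,j) = (if Ceq_arc n i j then omega else if Ceq_arc n j i then 1 - omega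
      else if cyc_edge n i j then 1 else 0)"
    using ij by (simp add: Ceq_mat_def mixed_mat_def omc)
  have nm: "n - 1 \<ge> 2" "odd n" using n by auto
  consider (a) "i + 1 < n" "j = i + 1" | (b) "i = n - 1" "j = 0" | (c) "j + 1 < n" "i = j + 1"
    | (d) "j = n - 1" "i = 0" | (e) "\<not> cyc_edge n i j"
  proof (cases "cyc_edge n i j")
    case False
    then show ?thesis by (rule that(5))
  next
    case True
    then have h: "j = (i + 1) mod n \<or> i = (j + 1) mod n" by (simp add: cyc_edge_def)
    show ?thesis
    proof (cases "j = (i + 1) mod n")
      case True
      show ?thesis
      proof (cases "i + 1 < n")
        case True
        then show ?thesis using `j = (i + 1) mod n` that(1) by simp
      next
        case False
        then have "i + 1 = n" using ij by simp
        then show ?thesis using `j = (i + 1) mod n` that(2) by simp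
      qed
    next
      case False
      then have hi: "i = (j + 1) mod n" using h by simp
      show ?thesis
      proof (cases "j + 1 < n")
        case True
        then show ?thesis using hi that(3) by simp
      next
        case False
        then have "j + 1 = n" using ij by simp
        then show ?thesis using hi that(4) by simp
      qed
    qed
  qed
  then show ?thesis
  proof cases
    case a
    then show ?thesis using n unfolding C E
      by (auto simp: cyc_edge_def Ceq_arc_def dd_def o2 algebra_simps)
  next
    case b
    then show ?thesis using n unfolding C E
      by (auto simp: cyc_edge_def Ceq_arc_def dd_def o2 algebra_simps)
  next
    case c
    have nn: "(j + 2) mod n \<noteq> j"
    proof (cases "j + 2 < n")
      case True then show ?thesis by simp
    next
      case False
      then have "(j + 2) mod n = (j + 2 - n) mod n" by (simp add: le_mod_geq)
      also have "\<dots> = j + 2 - n" using ij n by simp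
      finally have "(j + 2) mod n = j + 2 - n" .
      then show ?thesis using n False by simp
    qed
    have "j = 0 \<or> j = 1 \<or> j = 2 \<or> j \<ge> 3" by auto
    then show ?thesis using n c nn unfolding C E
      by (auto simp: cyc_edge_def Ceq_arc_def dd_def o2 algebra_simps)
  next
    case d
    then show ?thesis using n unfolding C E
      by (auto simp: cyc_edge_def Ceq_arc_def dd_def o2 algebra_simps)
  next
    case e
    then show ?thesis unfolding C E by (auto simp: Ceq_arc_def cyc_edge_def)
  qed
qed

lemma mv_expand:
  assumes "A \<in> carrier_mat n n" "w \<in> carrier_vec n" "i < n"
  shows "(A *\<^sub>v w) $ i = (\<Sum>j = 0..<n. A $$ (i, j) * w $ j)"
  using assms by (auto simp: mult_mat_vec_def scalar_prod_def intro!: sum.cong)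

lemma transfer_ev:
  fixes A B :: "complex mat"
  assumes A: "A \<in> carrier_mat n n" and B: "B \<in> carrier_mat n n"
    and f: "\<And>i. f i \<noteq> 0"
    and rel: "\<And>i j. i < n \<Longrightarrow> j < n \<Longrightarrow> A $$ (i,j) * f j = c * (f i * B $$ (i,j))"
    and ev: "eigenvalue B k"
  shows "eigenvalue A (c * k)"
proof -
  obtain v where v: "v \<in> carrier_vec n" "v \<noteq> 0\<^sub>v n" "B *\<^sub>v v = k \<cdot>\<^sub>v v"
    using ev B unfolding eigenvalue_def eigenvector_def by auto
  define w where "w = vec n (\<lambda>i. f i * v $ i)"
  have wc: "w \<in> carrier_vec n" unfolding w_def by simp
  have comp: "(B *\<^sub>v v) $ i = k * v $ i" if "i < n" for i
    using v that by simp
  have "A *\<^sub>v w = (c * k) \<cdot>\<^sub>v w"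
  proof (rule eq_vecI)
    fix i assume "i < dim_vec ((c * k) \<cdot>\<^sub>v w)"
    then have i: "i < n" using wc by simp
    have "(A *\<^sub>v w) $ i = (\<Sum>j = 0..<n. A $$ (i, j) * w $ j)"
      using mv_expand[OF A wc i] .
    also have "\<dots> = (\<Sum>j = 0..<n. c * f i * (B $$ (i, j) * v $ j))"
      by (rule sum.cong) (use rel[OF i] in \<open>auto simp: w_def algebra_simps\<close>)
    also have "\<dots> = c * f i * (B *\<^sub>v v) $ i"
      using mv_expand[OF B v(1) i] by (simp add: sum_distrib_left)
    also have "\<dots> = ((c * k) \<cdot>\<^sub>v w) $ i"
      using comp[OF i] i by (simp add: w_def)
    finally show "(A *\<^sub>v w) $ i = ((c * k) \<cdot>\<^sub>v w) $ i" .
  next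
    show "dim_vec (A *\<^sub>v w) = dim_vec ((c * k) \<cdot>\<^sub>v w)" using A wc by simp
  qed
  moreover have "w \<noteq> 0\<^sub>v n"
  proof
    assume w0: "w = 0\<^sub>v n"
    have "v = 0\<^sub>v n"
    proof (rule eq_vecI)
      fix i assume "i < dim_vec (0\<^sub>v n :: complex vec)"
      then have i: "i < n" by simp
      have "w $ i = 0" using w0 i by simp
      then show "v $ i = 0\<^sub>v n $ i" using i f[of i] by (simp add: w_def)
    qed (use v in simp)
    with v show False by simp
  qed
  ultimately show ?thesis using A wc unfolding eigenvalue_def eigenvector_def by auto
qed

theorem lemma6p9:
  fixes n :: nat and lam :: complex
  assumes "n \<ge> 3" and "odd n"
  shows "eigenvalue (C_mat n) lam \<longleftrightarrow> eigenvalue (Ceq_mat n) (- lam)"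
proof -
  have Cc: "C_mat n \<in> carrier_mat n n" by (simp add: C_mat_def mixed_mat_def)
  have Ec: "Ceq_mat n \<in> carrier_mat n n" by (simp add: Ceq_mat_def mixed_mat_def)
  show ?thesis
  proof
    assume ev: "eigenvalue (C_mat n) lam"
    have "eigenvalue (Ceq_mat n) ((-1) * lam)"
      by (rule transfer_ev[OF Ec Cc, where f = dd]) (auto simp: dd_nz entry[OF assms] ev)
    then show "eigenvalue (Ceq_mat n) (- lam)" by simp
  next
    assume ev: "eigenvalue (Ceq_mat n) (- lam)"
    have rel: "C_mat n $$ (i,j) * (1 / dd j) = (-1) * ((1 / dd i) * Ceq_mat n $$ (i,j))"
      if "i < n" "j < n" for i j
    proof -
      have e: "Ceq_mat n $$ (i,j) * dd j = - (dd i * C_mat n $$ (i,j))"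
        using entry[OF assms that] .
      have "Ceq_mat n $$ (i,j) = - (dd i * C_mat n $$ (i,j)) / dd j"
        using e dd_nz[of j] by (simp add: field_simps)
      then show ?thesis using dd_nz[of i] dd_nz[of j] by (simp add: field_simps)
    qed
    have "\<And>i. 1 / dd i \<noteq> 0" using dd_nz by simp
    from transfer_ev[OF Cc Ec this rel ev] show "eigenvalue (C_mat n) lam" by simp
  qed
qed

end
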